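(* Let $m$ be a positive integer and let $\phi_m$ be the unique root of $\phi^{m+1}+\phi^m-1=0$ in $(0,1)$. Then $\theta=\phi_m^2$ is the unique solution in $(0,1)$ of the equation $L_m(\theta)=L_{m+1}(\theta)$.
   Context: $\lg$ denotes $\log_2$. For a positive integer $m$ and $0<\theta<1$, $$L_m(\theta)=\begin{cases}1+\lg m+\dfrac{\theta^{m/2}}{1-\theta^{m/2}}, & m=2^\beta \text{ for some integer } \beta\ge0,\\[2mm] 1+\lfloor\lg m\rfloor+\dfrac{\theta^{(2^{\lceil\lg m\rceil}-m)/2}}{1-\theta^{m/2}}, & \text{otherwise.}\end{cases}$$ (This is the asymptotic average code length of the modified Rice-Golomb code with parameter $m$ for Laplace-distributed residuals with parameter $\theta$.) *)

theory Defs
  imports Complex_Main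
begin

text \<open>Asymptotic average code length of the modified Rice-Golomb code with
parameter m for Laplace-distributed residuals with parameter theta (0 < theta < 1).
lg = log 2.\<close>
definition L :: "nat \<Rightarrow> real \<Rightarrow> real" where
  "L m \<theta> =
     (if (\<exists>\<beta>::nat. m = 2 ^ \<beta>)
      then 1 + log 2 (real m) + \<theta> powr (real m / 2) / (1 - \<theta> powr (real m / 2))
      else 1 + real_of_int \<lfloor>log 2 (real m)\<rfloor>
             + \<theta> powr ((2 ^ nat \<lceil>log 2 (real m)\<rceil> - real m) / 2)
               / (1 - \<theta> powr (real m / 2)))"

end

theory Submission
  imports Defs
begin

lemma pw: assumes "0 < \<theta>" shows "\<theta> powr (real n / 2) = sqrt \<theta> ^ n"
proof -
  have "sqrt \<theta> ^ n = (\<theta> powr (1/2)) powr real n"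
    using assms by (simp add: powr_half_sqrt powr_realpow)
  also have "\<dots> = \<theta> powr (real n / 2)" by (simp add: powr_powr)
  finally show ?thesis by simp
qed

lemma L_eq:
  assumes "2^k \<le> m" "m < 2^(k+1)" "0 < \<theta>"
  shows "L m \<theta> = 1 + real k + sqrt \<theta> ^ (2^(k+1) - m) / (1 - sqrt \<theta> ^ m)"
proof -
  have m0: "m > 0" using assms(1) using not_gr0 by fastforce
  have fl: "\<lfloor>log 2 (real m)\<rfloor> = int k"
    using floor_log_nat_eq_if[of 2 k m] assms by simp
  show ?thesis
  proof (cases "\<exists>\<beta>::nat. m = 2 ^ \<beta>")
    case True
    then obtain \<beta> where b: "m = 2^\<beta>" by auto
    have "k \<le> \<beta>" using assms(1) b by (simp add: power_le_imp_le_exp)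
    moreover have "\<beta> < k+1" using assms(2) b power_less_imp_less_exp[of 2 \<beta> "k+1"] by simp
    ultimately have "\<beta> = k" by simp
    hence lg: "log 2 (real m) = k" using b by (simp add: log_nat_power)
    have e: "2^(k+1) - m = m" using b \<open>\<beta> = k\<close> by simp
    show ?thesis using True lg e pw[OF assms(3), of m] unfolding L_def by simp
  next
    case False
    have lt: "2^k < m" using False assms(1) le_neq_implies_less by blast
    have ce: "\<lceil>log 2 (real m)\<rceil> = int k + 1"
      using ceiling_log_nat_eq_powr_iff[of 2 m k] lt assms(2) m0 by simp
    have "(2 ^ nat \<lceil>log 2 (real m)\<rceil> - real m) = real (2^(k+1) - m)"
      using ce assms(2) by (simp add: of_nat_diff nat_add_distrib)
    thus ?thesis using False fl pw[OF assms(3), of m] pw[OF assms(3), of "2^(k+1) - m"]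
      unfolding L_def by simp
  qed
qed

lemma core: fixes t :: real assumes "0 < t" "t < 1"
  shows "t * (1 - t^(m+1)) = 1 - t^m \<longleftrightarrow> t^(m+1) + t^m = 1"
proof -
  have "t * (1 - t^(m+1)) - (1 - t^m) = (1 - t) * (t^(m+1) + t^m - 1)"
    by (simp add: algebra_simps)
  thus ?thesis using assms by auto
qed

lemma key: fixes t :: real assumes "0 < t" "t < 1" "m \<ge> 1"
  shows "L m (t^2) = L (m+1) (t^2) \<longleftrightarrow> t^(m+1) + t^m = 1"
proof -
  have st: "sqrt (t^2) = t" using assms by simp
  have t2: "0 < t^2" using assms by simp
  obtain k where k: "2^k \<le> m" "m < 2^(k+1)" using ex_power_ivl1[of 2 m] assms by auto
  have d1: "1 - t^m > 0" using assms by (simp add: power_less_one_iff)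
  have d2: "1 - t^(m+1) > 0" using assms power_less_one_iff[of t "m+1"] by simp
  show ?thesis
  proof (cases "m + 1 < 2^(k+1)")
    case True
    define N where "N = 2^(k+1) - (m+1)"
    have e1: "2^(k+1) - m = N + 1" using True N_def by simp
    have A: "L m (t^2) = 1 + real k + t^(N+1) / (1 - t^m)" using L_eq[OF k t2] st e1 by simp
    have B: "L (m+1) (t^2) = 1 + real k + t^N / (1 - t^(m+1))"
      using L_eq[of k "m+1", OF _ True t2] k st N_def by simp
    have "L m (t^2) = L (m+1) (t^2) \<longleftrightarrow> t^(N+1) / (1 - t^m) = t^N / (1 - t^(m+1))"
      using A B by simp
    also have "\<dots> \<longleftrightarrow> t^N * (t * (1 - t^(m+1))) = t^N * (1 - t^m)"
      using d1 d2 by (simp add: field_simps)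
    also have "\<dots> \<longleftrightarrow> t * (1 - t^(m+1)) = 1 - t^m" using assms by simp
    finally show ?thesis using core[OF assms(1,2)] by simp
  next
    case False
    hence eq: "m + 1 = 2^(k+1)" using k by simp
    have e1: "2^(k+1) - m = 1" using eq by simp
    have A: "L m (t^2) = 1 + real k + t / (1 - t^m)" using L_eq[OF k t2] st e1 by simp
    have e2: "2^(k+1+1) - (m+1) = m+1" using eq by simp
    have B: "L (m+1) (t^2) = 1 + real (k+1) + t^(m+1) / (1 - t^(m+1))"
    proof -
      have "L (m+1) (t^2) = 1 + real (k+1) + sqrt (t^2) ^ (2^(k+1+1) - (m+1)) / (1 - sqrt (t^2) ^ (m+1))"
        by (rule L_eq) (use eq t2 in auto)
      thus ?thesis unfolding e2 st .
    qed
    have B': "L (m+1) (t^2) = 1 + real k + 1 / (1 - t^(m+1))"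
      using B d2 by (simp add: field_simps)
    have "L m (t^2) = L (m+1) (t^2) \<longleftrightarrow> t / (1 - t^m) = 1 / (1 - t^(m+1))"
      using A B' by simp
    also have "\<dots> \<longleftrightarrow> t * (1 - t^(m+1)) = 1 - t^m"
      using d1 d2 by (simp add: field_simps) linarith
    finally show ?thesis using core[OF assms(1,2)] by simp
  qed
qed

lemma mono_g: fixes s t :: real assumes "0 < s" "s < t"
  shows "s^(m+1) + s^m < t^(m+1) + t^m"
proof -
  have "s^(m+1) < t^(m+1)" using assms by (intro power_strict_mono) auto
  moreover have "s^m \<le> t^m" using assms by (intro power_mono) auto
  ultimately show ?thesis by simp
qed

theorem lemma3:
  fixes m :: nat and \<phi> :: real
  assumes "m \<ge> 1"
    and "0 < \<phi>" and "\<phi> < 1"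
    and "\<phi> ^ (m + 1) + \<phi> ^ m - 1 = 0"
  shows "0 < \<phi>\<^sup>2 \<and> \<phi>\<^sup>2 < 1 \<and> L m (\<phi>\<^sup>2) = L (m + 1) (\<phi>\<^sup>2) \<and>
         (\<forall>\<theta>::real. 0 < \<theta> \<and> \<theta> < 1 \<and> L m \<theta> = L (m + 1) \<theta> \<longrightarrow> \<theta> = \<phi>\<^sup>2)"
proof (intro conjI allI impI)
  show "0 < \<phi>\<^sup>2" using assms by simp
  show "\<phi>\<^sup>2 < 1" using assms by (simp add: power_less_one_iff)
  show "L m (\<phi>\<^sup>2) = L (m + 1) (\<phi>\<^sup>2)" using key[OF assms(2,3,1)] assms(4) by simp
  fix \<theta> :: real assume h: "0 < \<theta> \<and> \<theta> < 1 \<and> L m \<theta> = L (m + 1) \<theta>"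
  define t where "t = sqrt \<theta>"
  have th: "\<theta> = t^2" using h t_def by simp
  have t0: "0 < t" "t < 1" using h t_def by auto
  have g: "t^(m+1) + t^m = 1" using key[OF t0 assms(1)] h th by simp
  have "t = \<phi>"
  proof (rule ccontr)
    assume "t \<noteq> \<phi>"
    hence "t < \<phi> \<or> \<phi> < t" by auto
    thus False using mono_g[of t \<phi> m] mono_g[of \<phi> t m] t0 assms g by auto
  qed
  thus "\<theta> = \<phi>\<^sup>2" using th by simp
qed

end
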